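(* For every integer $k$ with $7\le k\le 17$, the Tuza constant satisfies $c_k \ge \dfrac{3}{2k+6}$.
   Context: A hypergraph $H=(V,E)$ consists of a finite vertex set $V$ and a finite collection $E$ of subsets of $V$ (edges). $H$ is $k$-uniform if every edge has exactly $k$ vertices. A transversal of $H$ is a set $T\subseteq V$ meeting every edge; $\tau(H)$ denotes the minimum size of a transversal. For $k\ge 1$, the Tuza constant is $c_k=\sup_{H} \tau(H)/(m+n)$, where the supremum ranges over all $k$-uniform hypergraphs $H$, with $n=|V|$ and $m=|E|$. *)

theory Defs
  imports "HOL-Analysis.Analysis" "HOL-Library.Multiset"
begin

text \<open>A hypergraph: a finite vertex set V and a finite collection (multiset) E of
  subsets of V. Vertices are taken from nat (every finite hypergraph is isomorphic
  to one with vertices in nat).\<close>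

definition uniform_hypergraph :: "nat \<Rightarrow> nat set \<Rightarrow> nat set multiset \<Rightarrow> bool" where
  "uniform_hypergraph k V E \<longleftrightarrow> finite V \<and> (\<forall>e \<in># E. e \<subseteq> V \<and> card e = k)"

definition is_transversal :: "nat set \<Rightarrow> nat set multiset \<Rightarrow> nat set \<Rightarrow> bool" where
  "is_transversal V E T \<longleftrightarrow> T \<subseteq> V \<and> (\<forall>e \<in># E. T \<inter> e \<noteq> {})"

definition tau :: "nat set \<Rightarrow> nat set multiset \<Rightarrow> nat" where
  "tau V E = Min {card T | T. is_transversal V E T}"

definition tuza_constant :: "nat \<Rightarrow> real" where
  "tuza_constant k = Sup {real (tau V E) / real (size E + card V) | V E. uniform_hypergraph k V E}"

end

theory Submission
  imports Defs
begin

lemma tau_le_card: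
  assumes "uniform_hypergraph k V E" "k \<ge> 1"
  shows "tau V E \<le> card V"
proof -
  have fin: "finite V" using assms(1) unfolding uniform_hypergraph_def by blast
  have tr: "is_transversal V E V"
    unfolding is_transversal_def
  proof (intro conjI ballI)
    fix e assume "e \<in># E"
    then have "e \<subseteq> V" "card e = k" using assms(1) unfolding uniform_hypergraph_def by auto
    moreover have "e \<noteq> {}" using \<open>card e = k\<close> assms(2) by (metis card.empty not_one_le_zero)
    ultimately show "V \<inter> e \<noteq> {}" by blast
  qed simp
  have "{card T | T. is_transversal V E T} \<subseteq> card ` Pow V"
    unfolding is_transversal_def by auto
  then have "finite {card T | T. is_transversal V E T}" using fin finite_surj by blast
  moreover have "card V \<in> {card T | T. is_transversal V E T}" using tr by blast
  ultimately show ?thesis unfolding tau_def by (rule Min_le)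
qed

lemma bdd: assumes "k \<ge> 1"
  shows "bdd_above {real (tau V E) / real (size E + card V) | V E. uniform_hypergraph k V E}"
  unfolding bdd_above_def
proof (intro exI[of _ 1] ballI)
  fix r assume "r \<in> {real (tau V E) / real (size E + card V) | V E. uniform_hypergraph k V E}"
  then obtain V E where r: "r = real (tau V E) / real (size E + card V)" and u: "uniform_hypergraph k V E" by blast
  have "tau V E \<le> size E + card V" using tau_le_card[OF u assms] by simp
  then show "r \<le> 1" unfolding r
    by (metis divide_le_eq_1 of_nat_le_iff of_nat_0_le_iff order_le_less)
qed

lemma two_sub:
  assumes "finite T" "card T < 3" "T \<noteq> {}"
  obtains x y where "x \<in> T" "y \<in> T" "T \<subseteq> {x, y}"
proof -
  obtain x where x: "x \<in> T" using assms(3) by blast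
  show ?thesis
  proof (cases "T - {x} = {}")
    case True then show ?thesis using that[of x x] x by blast
  next
    case False
    then obtain y where y: "y \<in> T - {x}" by blast
    have "card (T - {x}) < 2" using assms x by (simp add: card_Diff_singleton)
    then have "card (T - {x} - {y}) = 0" using y assms(1) by (simp add: card_Diff_singleton)
    then have "T - {x} - {y} = {}" using assms(1) by simp
    then show ?thesis using that[of x y] x y by blast
  qed
qed

lemma main:
  fixes ts :: "nat list list"
  assumes c: "\<forall>j<7. length (filter (\<lambda>x. j \<notin> set (ts!x)) [0..<length ts]) = k"
    and p: "\<forall>x<length ts. \<forall>y<length ts. \<exists>j<7. j \<in> set (ts!x) \<and> j \<in> set (ts!y)"
    and n: "length ts + 1 \<le> 2*k" and k: "k \<ge> 1"
  shows "tuza_constant k \<ge> 3 / (2 * real k + 6)"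
proof -
  define n where "n = length ts"
  define e where "e j = {x. x < n \<and> j \<notin> set (ts!x)}" for j
  define V where "V = {..<n}"
  define E where "E = mset (map e [0..<7])"
  have ce: "card (e j) = k" if "j < 7" for j
  proof -
    have "e j = set (filter (\<lambda>x. j \<notin> set (ts!x)) [0..<n])" unfolding e_def by auto
    then have "card (e j) = length (filter (\<lambda>x. j \<notin> set (ts!x)) [0..<n])"
      by (metis distinct_card distinct_filter distinct_upt)
    then show ?thesis using c that n_def by simp
  qed
  have inE: "e' \<in># E \<longleftrightarrow> (\<exists>j<7. e' = e j)" for e' unfolding E_def by auto
  have u: "uniform_hypergraph k V E"
    unfolding uniform_hypergraph_def V_def using ce inE by (auto simp: e_def)
  have sz: "size E = 7" unfolding E_def by simp
  have cV: "card V = n" unfolding V_def by simp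
  have fin: "finite {card T | T. is_transversal V E T}"
  proof -
    have "{card T | T. is_transversal V E T} \<subseteq> card ` Pow V"
      unfolding is_transversal_def by auto
    then show ?thesis using finite_surj unfolding V_def by blast
  qed
  have tr: "is_transversal V E V"
    unfolding is_transversal_def
  proof (intro conjI ballI)
    fix e' assume "e' \<in># E"
    then have "e' \<subseteq> V" "card e' = k" using u unfolding uniform_hypergraph_def by auto
    moreover have "e' \<noteq> {}" using \<open>card e' = k\<close> k by (metis card.empty not_one_le_zero)
    ultimately show "V \<inter> e' \<noteq> {}" by blast
  qed simp
  have ge3: "card T \<ge> 3" if T: "is_transversal V E T" for T
  proof (rule ccontr)
    assume lt: "\<not> card T \<ge> 3"
    have TV: "T \<subseteq> V" and hit: "\<And>j. j < 7 \<Longrightarrow> T \<inter> e j \<noteq> {}"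
      using T inE unfolding is_transversal_def by auto
    have fT: "finite T" using TV finite_subset unfolding V_def by blast
    have "T \<noteq> {}" using hit[of 0] by auto
    then obtain x y where xy: "x \<in> T" "y \<in> T" "T \<subseteq> {x,y}" using two_sub[OF fT] lt by force
    have "x < n" "y < n" using xy TV unfolding V_def by auto
    then obtain j where j: "j < 7" "j \<in> set (ts!x)" "j \<in> set (ts!y)" using p n_def by blast
    have "T \<inter> e j = {}" using xy j unfolding e_def by auto
    then show False using hit j by blast
  qed
  have tau3: "tau V E \<ge> 3"
    unfolding tau_def using fin tr ge3 by (subst Min_ge_iff) auto
  have "3 / (2 * real k + 6) \<le> 3 / real (7 + n)"
    using n n_def by (intro divide_left_mono) auto
  also have "\<dots> \<le> real (tau V E) / real (size E + card V)"
    using tau3 sz cV by (simp add: divide_right_mono)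
  also have "\<dots> \<le> tuza_constant k"
    unfolding tuza_constant_def using u by (intro cSup_upper bdd k) blast
  finally show ?thesis .
qed

lemma inst7: "tuza_constant 7 \<ge> 3 / (2 * real (7::nat) + 6)"
  by (rule main[of "[[0,1,2,3], [0,1,2,4], [0,1,3,5], [0,3,4], [0,5,6], [0,5,6], [1,3,5], [1,4,6], [1,4,6], [2,3,6], [2,3,6], [2,4,5], [2,4,5]]"]) code_simp+

lemma inst8: "tuza_constant 8 \<ge> 3 / (2 * real (8::nat) + 6)"
  by (rule main[of "[[0,1,2], [0,1,2], [0,3,4], [0,3,4], [0,5,6], [0,5,6], [1,3,5], [1,3,5], [1,4,6], [1,4,6], [2,3,6], [2,3,6], [2,4,5], [2,4,5]]"]) code_simp+

lemma inst9: "tuza_constant 9 \<ge> 3 / (2 * real (9::nat) + 6)"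
  by (rule main[of "[[0,1,2,3], [0,1,2,3], [0,1,2,3], [0,1,3,4], [0,3,4,5], [0,5,6], [0,5,6], [0,5,6], [1,3,5], [1,4,6], [1,4,6], [1,4,6], [2,3,6], [2,3,6], [2,4,5], [2,4,5], [2,4,5]]"]) code_simp+

lemma inst10: "tuza_constant 10 \<ge> 3 / (2 * real (10::nat) + 6)"
  by (rule main[of "[[0,1,2,3], [0,1,2,3], [0,1,2], [0,3,4], [0,3,4], [0,5,6], [0,5,6], [0,5,6], [1,3,5], [1,3,5], [1,4,6], [1,4,6], [1,4,6], [2,3,6], [2,3,6], [2,4,5], [2,4,5], [2,4,5]]"]) code_simp+

lemma inst11: "tuza_constant 11 \<ge> 3 / (2 * real (11::nat) + 6)"
  by (rule main[of "[[0,1,2,3], [0,1,2,4], [0,1,3,5], [0,1,2], [0,3,4], [0,3,4], [0,5,6], [0,5,6], [0,5,6], [1,3,5], [1,3,5], [1,4,6], [1,4,6], [1,4,6], [2,3,6], [2,3,6], [2,3,6], [2,4,5], [2,4,5], [2,4,5]]"]) code_simp+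

lemma inst12: "tuza_constant 12 \<ge> 3 / (2 * real (12::nat) + 6)"
  by (rule main[of "[[0,1,2], [0,1,2], [0,1,2], [0,3,4], [0,3,4], [0,3,4], [0,5,6], [0,5,6], [0,5,6], [1,3,5], [1,3,5], [1,3,5], [1,4,6], [1,4,6], [1,4,6], [2,3,6], [2,3,6], [2,3,6], [2,4,5], [2,4,5], [2,4,5]]"]) code_simp+

lemma inst13: "tuza_constant 13 \<ge> 3 / (2 * real (13::nat) + 6)"
  by (rule main[of "[[0,1,2,3], [0,1,2,3], [0,1,2,3], [0,1,2,4], [0,1,3,5], [0,3,4], [0,3,4], [0,5,6], [0,5,6], [0,5,6], [0,5,6], [1,3,5], [1,3,5], [1,4,6], [1,4,6], [1,4,6], [1,4,6], [2,3,6], [2,3,6], [2,3,6], [2,4,5], [2,4,5], [2,4,5], [2,4,5]]"]) code_simp+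

lemma inst14: "tuza_constant 14 \<ge> 3 / (2 * real (14::nat) + 6)"
  by (rule main[of "[[0,1,2,3], [0,1,2,3], [0,1,2], [0,1,2], [0,3,4], [0,3,4], [0,3,4], [0,5,6], [0,5,6], [0,5,6], [0,5,6], [1,3,5], [1,3,5], [1,3,5], [1,4,6], [1,4,6], [1,4,6], [1,4,6], [2,3,6], [2,3,6], [2,3,6], [2,4,5], [2,4,5], [2,4,5], [2,4,5]]"]) code_simp+

lemma inst15: "tuza_constant 15 \<ge> 3 / (2 * real (15::nat) + 6)"
  by (rule main[of "[[0,1,2,3], [0,1,2,4], [0,1,3,5], [0,1,2], [0,1,2], [0,3,4], [0,3,4], [0,3,4], [0,5,6], [0,5,6], [0,5,6], [0,5,6], [1,3,5], [1,3,5], [1,3,5], [1,4,6], [1,4,6], [1,4,6], [1,4,6], [2,3,6], [2,3,6], [2,3,6], [2,3,6], [2,4,5], [2,4,5], [2,4,5], [2,4,5]]"]) code_simp+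

lemma inst16: "tuza_constant 16 \<ge> 3 / (2 * real (16::nat) + 6)"
  by (rule main[of "[[0,1,2], [0,1,2], [0,1,2], [0,1,2], [0,3,4], [0,3,4], [0,3,4], [0,3,4], [0,5,6], [0,5,6], [0,5,6], [0,5,6], [1,3,5], [1,3,5], [1,3,5], [1,3,5], [1,4,6], [1,4,6], [1,4,6], [1,4,6], [2,3,6], [2,3,6], [2,3,6], [2,3,6], [2,4,5], [2,4,5], [2,4,5], [2,4,5]]"]) code_simp+

lemma inst17: "tuza_constant 17 \<ge> 3 / (2 * real (17::nat) + 6)"
  by (rule main[of "[[0,1,2,3], [0,1,2,3], [0,1,2,3], [0,1,2,4], [0,1,3,5], [0,1,2], [0,3,4], [0,3,4], [0,3,4], [0,5,6], [0,5,6], [0,5,6], [0,5,6], [0,5,6], [1,3,5], [1,3,5], [1,3,5], [1,4,6], [1,4,6], [1,4,6], [1,4,6], [1,4,6], [2,3,6], [2,3,6], [2,3,6], [2,3,6], [2,4,5], [2,4,5], [2,4,5], [2,4,5], [2,4,5]]"]) code_simp+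

theorem theorem1:
  fixes k :: nat
  assumes "7 \<le> k" and "k \<le> 17"
  shows "tuza_constant k \<ge> 3 / (2 * real k + 6)"
proof -
  have "k \<in> {7..17}" using assms by simp
  then have "k = 7 \<or> k = 8 \<or> k = 9 \<or> k = 10 \<or> k = 11 \<or> k = 12 \<or> k = 13 \<or> k = 14 \<or> k = 15 \<or> k = 16 \<or> k = 17"
    by (simp only: atLeastAtMost_iff) presburger
  then show ?thesis
    using inst7 inst8 inst9 inst10 inst11 inst12 inst13 inst14 inst15 inst16 inst17 by auto
qed

end
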